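(* Let $f:2^V\to\mathbb{R}$ be a monotone non-decreasing submodular function with $f(\emptyset)=0$. Then for every $x\in[0,1]^n$ and every permutation $\sigma$ of $V$, $$d_{\hat f}(x\|\sigma)\le \epsilon\, n\Big(\max_{j\in V} f(\{j\})-\min_{j\in V} f(j\mid V\setminus\{j\})\Big)\le \epsilon\, n\max_{j\in V} f(\{j\}),$$ where $\epsilon=\max_{i,j\in V}|x_i-x_j|$ and $f(j\mid A)=f(A\cup\{j\})-f(A)$.
   Context: Let $V=\{1,\dots,n\}$. A permutation $\sigma$ is a bijection $V\to V$, where $\sigma(i)$ is the element placed at rank $i$. Write $S^\sigma_0=\emptyset$, $S^\sigma_j=\{\sigma(1),\dots,\sigma(j)\}$. For $f:2^V\to\mathbb{R}$ define $h^f_\sigma\in\mathbb{R}^n$ by $h^f_\sigma(\sigma(j))=f(S^\sigma_j)-f(S^\sigma_{j-1})$. For $x\in\mathbb{R}^n$, $\sigma_x$ orders $x$ if $x(\sigma_x(1))\ge\cdots\ge x(\sigma_x(n))$; the Lovász extension is $\hat f(x)=\langle x,h^f_{\sigma_x}\rangle$ (independent of the choice of $\sigma_x$). The LB divergence is $d_{\hat f}(x\|\sigma)=\hat f(x)-\langle x,h^f_\sigma\rangle$ for $x\in[0,1]^n$. *)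

theory Defs
  imports Complex_Main
begin

text \<open>Ground set V = {1..n}; set functions f :: nat set => real on subsets of V;
 vectors x in R^n as functions nat => real (only values on {1..n} matter);
 permutations as bijections of {1..n}.\<close>

definition is_perm :: "nat \<Rightarrow> (nat \<Rightarrow> nat) \<Rightarrow> bool" where
  "is_perm n \<sigma> \<longleftrightarrow> bij_betw \<sigma> {1..n} {1..n}"

definition prefix_set :: "(nat \<Rightarrow> nat) \<Rightarrow> nat \<Rightarrow> nat set" where
  "prefix_set \<sigma> j = \<sigma> ` {1..j}"

definition hvec :: "nat \<Rightarrow> (nat set \<Rightarrow> real) \<Rightarrow> (nat \<Rightarrow> nat) \<Rightarrow> nat \<Rightarrow> real" where
  "hvec n f \<sigma> i = (let j = inv_into {1..n} \<sigma> i in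
       f (prefix_set \<sigma> j) - f (prefix_set \<sigma> (j - 1)))"

definition inner_n :: "nat \<Rightarrow> (nat \<Rightarrow> real) \<Rightarrow> (nat \<Rightarrow> real) \<Rightarrow> real" where
  "inner_n n x y = (\<Sum>i\<in>{1..n}. x i * y i)"

definition orders :: "nat \<Rightarrow> (nat \<Rightarrow> real) \<Rightarrow> (nat \<Rightarrow> nat) \<Rightarrow> bool" where
  "orders n x \<sigma> \<longleftrightarrow> is_perm n \<sigma> \<and> (\<forall>i\<in>{1..n}. \<forall>j\<in>{1..n}. i \<le> j \<longrightarrow> x (\<sigma> i) \<ge> x (\<sigma> j))"

definition lovasz :: "nat \<Rightarrow> (nat set \<Rightarrow> real) \<Rightarrow> (nat \<Rightarrow> real) \<Rightarrow> real" where
  "lovasz n f x = inner_n n x (hvec n f (SOME \<sigma>. orders n x \<sigma>))"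

definition LB_div :: "nat \<Rightarrow> (nat set \<Rightarrow> real) \<Rightarrow> (nat \<Rightarrow> real) \<Rightarrow> (nat \<Rightarrow> nat) \<Rightarrow> real" where
  "LB_div n f x \<sigma> = lovasz n f x - inner_n n x (hvec n f \<sigma>)"

definition monotone_setfun :: "nat \<Rightarrow> (nat set \<Rightarrow> real) \<Rightarrow> bool" where
  "monotone_setfun n f \<longleftrightarrow> (\<forall>A B. A \<subseteq> B \<and> B \<subseteq> {1..n} \<longrightarrow> f A \<le> f B)"

definition submodular :: "nat \<Rightarrow> (nat set \<Rightarrow> real) \<Rightarrow> bool" where
  "submodular n f \<longleftrightarrow> (\<forall>A B. A \<subseteq> {1..n} \<and> B \<subseteq> {1..n} \<longrightarrow>
      f (A \<union> B) + f (A \<inter> B) \<le> f A + f B)"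

definition marginal :: "(nat set \<Rightarrow> real) \<Rightarrow> nat \<Rightarrow> nat set \<Rightarrow> real" where
  "marginal f j A = f (A \<union> {j}) - f A"

end

theory Submission
  imports Defs
begin

lemma tele: "(\<Sum>j\<in>{1..(k::nat)}. (g j - g (j - 1))) = (g k - g 0 :: real)"
  by (induction k) (auto simp: sum.cl_ivl_Suc)

lemma hvec_at:
  assumes "is_perm n \<tau>" "j \<in> {1..n}"
  shows "hvec n f \<tau> (\<tau> j) = f (prefix_set \<tau> j) - f (prefix_set \<tau> (j - 1))"
proof -
  have "inv_into {1..n} \<tau> (\<tau> j) = j"
    using assms by (meson bij_betw_imp_inj_on inv_into_f_f is_perm_def)
  thus ?thesis by (simp add: hvec_def)
qed

lemma hvec_sum:
  assumes "is_perm n \<tau>" "f {} = 0"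
  shows "(\<Sum>i\<in>{1..n}. hvec n f \<tau> i) = f {1..n}"
proof -
  have b: "bij_betw \<tau> {1..n} {1..n}" using assms is_perm_def by auto
  have "(\<Sum>i\<in>{1..n}. hvec n f \<tau> i) = (\<Sum>j\<in>{1..n}. hvec n f \<tau> (\<tau> j))"
    using sum.reindex_bij_betw[OF b, of "hvec n f \<tau>"] by simp
  also have "\<dots> = (\<Sum>j\<in>{1..n}. f (prefix_set \<tau> j) - f (prefix_set \<tau> (j - 1)))"
    using hvec_at[OF assms(1)] by simp
  also have "\<dots> = f (prefix_set \<tau> n) - f (prefix_set \<tau> 0)"
    by (rule tele)
  also have "\<dots> = f {1..n}" using b assms(2)
    by (simp add: prefix_set_def bij_betw_def)
  finally show ?thesis .
qed

lemma dimret: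
  assumes "submodular n f" "A \<subseteq> B" "B \<subseteq> {1..n}" "k \<in> {1..n}" "k \<notin> B"
  shows "f (B \<union> {k}) - f B \<le> f (A \<union> {k}) - f A"
proof -
  have "f ((A \<union> {k}) \<union> B) + f ((A \<union> {k}) \<inter> B) \<le> f (A \<union> {k}) + f B"
  proof -
    have "A \<union> {k} \<subseteq> {1..n}" using assms by auto
    thus ?thesis using assms(1,3) unfolding submodular_def by blast
  qed
  moreover have "(A \<union> {k}) \<union> B = B \<union> {k}" using assms by auto
  moreover have "(A \<union> {k}) \<inter> B = A" using assms by auto
  ultimately show ?thesis by simp
qed

lemma hvec_bounds:
  assumes "is_perm n \<tau>" "submodular n f" "f {} = 0" "i \<in> {1..n}"
  shows "marginal f i ({1..n} - {i}) \<le> hvec n f \<tau> i \<and> hvec n f \<tau> i \<le> f {i}"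
proof -
  have b: "bij_betw \<tau> {1..n} {1..n}" using assms(1) unfolding is_perm_def .
  obtain j where j: "j \<in> {1..n}" "i = \<tau> j" proof -
    have "i \<in> \<tau> ` {1..n}" using b assms(4) by (simp add: bij_betw_def)
    thus ?thesis using that by blast
  qed
  let ?P = "prefix_set \<tau> (j - 1)"
  have ins: "{1..j} = insert j {1..j-1}" using j by auto
  have P1: "prefix_set \<tau> j = ?P \<union> {i}" using j
    unfolding prefix_set_def by (subst ins) auto
  have Psub: "?P \<subseteq> {1..n}"
  proof -
    have "{1..j-1} \<subseteq> {1..n}" using j by auto
    hence "?P \<subseteq> \<tau> ` {1..n}" unfolding prefix_set_def by (rule image_mono)
    thus ?thesis using b by (simp add: bij_betw_def)
  qed
  have inotP: "i \<notin> ?P"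
  proof
    assume "i \<in> ?P"
    then obtain k where k: "k \<in> {1..j-1}" "i = \<tau> k" unfolding prefix_set_def by auto
    have kV: "k \<in> {1..n}" using k j by auto
    have "k = j" using b k j kV unfolding bij_betw_def inj_on_def by metis
    thus False using k j by auto
  qed
  have h: "hvec n f \<tau> i = f (?P \<union> {i}) - f ?P" using hvec_at[OF assms(1) j(1), of f] j P1 by simp
  have u: "f (?P \<union> {i}) - f ?P \<le> f ({} \<union> {i}) - f {}"
    by (rule dimret[OF assms(2)]) (use Psub inotP assms(4) in auto)
  have l: "f (({1..n} - {i}) \<union> {i}) - f ({1..n} - {i}) \<le> f (?P \<union> {i}) - f ?P"
    by (rule dimret[OF assms(2)]) (use Psub inotP assms(4) in auto)
  show ?thesis using u l h assms(3) unfolding marginal_def by simp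
qed

lemma orders_ex:
  "\<exists>\<sigma>. orders n x \<sigma>"
proof -
  define xs where "xs = sort_key (\<lambda>i. - x i) [1..<n+1]"
  have len: "length xs = n" by (simp add: xs_def)
  have dist: "distinct xs" by (simp add: xs_def)
  have st: "set xs = {1..n}" by (auto simp: xs_def)
  have so: "sorted (map (\<lambda>i. - x i) xs)" unfolding xs_def by (rule sorted_sort_key)
  define \<sigma> where "\<sigma> i = xs ! (i - 1)" for i
  have img: "\<sigma> ` {1..n} = {1..n}"
  proof -
    have e: "{1..n} = Suc ` {0..<n}" by (simp add: image_Suc_atLeastLessThan atLeastLessThanSuc_atLeastAtMost)
    have "\<sigma> ` {1..n} = (\<lambda>k. xs ! k) ` {0..<n}"
      unfolding e image_image \<sigma>_def by simp
    also have "\<dots> = set xs" using len by (auto simp: set_conv_nth)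
    finally show ?thesis using st by simp
  qed
  have inj: "inj_on \<sigma> {1..n}"
    unfolding inj_on_def \<sigma>_def using dist len
    by (auto simp: nth_eq_iff_index_eq)
  have perm: "is_perm n \<sigma>" unfolding is_perm_def bij_betw_def using img inj by simp
  have ord: "\<forall>i\<in>{1..n}. \<forall>j\<in>{1..n}. i \<le> j \<longrightarrow> x (\<sigma> i) \<ge> x (\<sigma> j)"
  proof (intro ballI impI)
    fix i j assume ij: "i \<in> {1..n}" "j \<in> {1..n}" "i \<le> j"
    have "map (\<lambda>i. - x i) xs ! (i - 1) \<le> map (\<lambda>i. - x i) xs ! (j - 1)"
      using sorted_nth_mono[OF so, of "i - 1" "j - 1"] ij len by auto
    thus "x (\<sigma> i) \<ge> x (\<sigma> j)" using ij len by (simp add: \<sigma>_def)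
  qed
  show ?thesis using perm ord orders_def by blast
qed

theorem mainTheorem7:
  fixes n :: nat and f :: "nat set \<Rightarrow> real" and x :: "nat \<Rightarrow> real" and \<sigma> :: "nat \<Rightarrow> nat"
  assumes "monotone_setfun n f" and "submodular n f" and "f {} = 0"
    and "\<forall>i\<in>{1..n}. 0 \<le> x i \<and> x i \<le> 1"
    and "is_perm n \<sigma>"
  defines "\<epsilon> \<equiv> Max {\<bar>x i - x j\<bar> | i j. i \<in> {1..n} \<and> j \<in> {1..n}}"
  shows "LB_div n f x \<sigma> \<le> \<epsilon> * real n * (Max ((\<lambda>j. f {j}) ` {1..n})
              - Min ((\<lambda>j. marginal f j ({1..n} - {j})) ` {1..n}))
    \<and> \<epsilon> * real n * (Max ((\<lambda>j. f {j}) ` {1..n})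
              - Min ((\<lambda>j. marginal f j ({1..n} - {j})) ` {1..n}))
      \<le> \<epsilon> * real n * Max ((\<lambda>j. f {j}) ` {1..n})"
proof (cases "n = 0")
  case True
  then show ?thesis by (simp add: LB_div_def lovasz_def inner_n_def)
next
  case False
  let ?V = "{1..n}"
  let ?M = "Max ((\<lambda>j. f {j}) ` ?V)"
  let ?m = "Min ((\<lambda>j. marginal f j (?V - {j})) ` ?V)"
  define \<tau> where "\<tau> = (SOME \<sigma>. orders n x \<sigma>)"
  have tp: "is_perm n \<tau>" using someI_ex[OF orders_ex[of n x]] unfolding \<tau>_def orders_def by blast
  have ne: "?V \<noteq> {}" using False by simp
  have S: "{\<bar>x i - x j\<bar> | i j. i \<in> ?V \<and> j \<in> ?V} \<subseteq> (\<lambda>(i,j). \<bar>x i - x j\<bar>) ` (?V \<times> ?V)"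
  proof clarify
    fix i j :: nat assume "i \<in> ?V" "j \<in> ?V"
    thus "\<bar>x i - x j\<bar> \<in> (\<lambda>(i,j). \<bar>x i - x j\<bar>) ` (?V \<times> ?V)"
      by (intro image_eqI[of _ _ "(i,j)"]) auto
  qed
  have Sfin: "finite {\<bar>x i - x j\<bar> | i j. i \<in> ?V \<and> j \<in> ?V}"
    by (rule finite_subset[OF S]) simp
  have marg_nn: "marginal f j (?V - {j}) \<ge> 0" if "j \<in> ?V" for j
  proof -
    have e: "(?V - {j}) \<union> {j} = ?V" using that by auto
    have "f (?V - {j}) \<le> f ?V" using assms(1) unfolding monotone_setfun_def
      by (metis Diff_subset order_refl)
    thus ?thesis unfolding marginal_def e by simp
  qed
  have "1 \<in> ?V" using False by simp
  have mM: "?m \<le> ?M"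
  proof -
    have "?m \<le> marginal f 1 (?V - {1})" by (rule Min_le) (use \<open>1 \<in> ?V\<close> in auto)
    also have "\<dots> \<le> f {1}" using hvec_bounds[OF tp assms(2,3) \<open>1 \<in> ?V\<close>] by linarith
    also have "\<dots> \<le> ?M" by (rule Max_ge) (use \<open>1 \<in> ?V\<close> in auto)
    finally show ?thesis .
  qed
  have epsnn: "\<epsilon> \<ge> 0"
  proof -
    have "\<bar>x 1 - x 1\<bar> \<le> \<epsilon>" unfolding \<epsilon>_def by (rule Max_ge[OF Sfin]) (use \<open>1 \<in> ?V\<close> in blast)
    thus ?thesis by simp
  qed
  have mnn: "?m \<ge> 0" using marg_nn ne by (subst Min_ge_iff) auto
  define c where "c = Min (x ` ?V)"
  have "c \<in> x ` ?V" unfolding c_def using ne by (intro Min_in) auto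
  then obtain k where k: "k \<in> ?V" "x k = c" by auto
  have xc: "0 \<le> x i - c \<and> x i - c \<le> \<epsilon>" if "i \<in> ?V" for i
  proof
    show "0 \<le> x i - c" unfolding c_def using that by simp
    have "\<bar>x i - x k\<bar> \<le> \<epsilon>" unfolding \<epsilon>_def by (rule Max_ge[OF Sfin]) (use that k in blast)
    thus "x i - c \<le> \<epsilon>" using k by simp
  qed
  have "LB_div n f x \<sigma> = (\<Sum>i\<in>?V. x i * (hvec n f \<tau> i - hvec n f \<sigma> i))"
    unfolding LB_div_def lovasz_def inner_n_def \<tau>_def[symmetric]
    by (simp add: sum_subtractf algebra_simps)
  also have "\<dots> = (\<Sum>i\<in>?V. (x i - c) * (hvec n f \<tau> i - hvec n f \<sigma> i))
      + c * ((\<Sum>i\<in>?V. hvec n f \<tau> i) - (\<Sum>i\<in>?V. hvec n f \<sigma> i))"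
    by (simp add: sum_subtractf sum_distrib_left algebra_simps sum.distrib)
  also have "\<dots> = (\<Sum>i\<in>?V. (x i - c) * (hvec n f \<tau> i - hvec n f \<sigma> i))"
    using hvec_sum[of n \<tau> f, OF tp assms(3)] hvec_sum[of n \<sigma> f, OF assms(5,3)] by simp
  also have "\<dots> \<le> (\<Sum>i\<in>?V. \<epsilon> * (?M - ?m))"
  proof (rule sum_mono)
    fix i assume i: "i \<in> ?V"
    have "hvec n f \<tau> i - hvec n f \<sigma> i \<le> f {i} - marginal f i (?V - {i})"
      using hvec_bounds[OF tp assms(2,3) i] hvec_bounds[OF assms(5,2,3) i] by linarith
    also have "\<dots> \<le> ?M - ?m"
    proof -
      have "f {i} \<le> ?M" by (rule Max_ge) (use i in auto)
      moreover have "?m \<le> marginal f i (?V - {i})" by (rule Min_le) (use i in auto)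
      ultimately show ?thesis by linarith
    qed
    finally have d: "hvec n f \<tau> i - hvec n f \<sigma> i \<le> ?M - ?m" .
    have "(x i - c) * (hvec n f \<tau> i - hvec n f \<sigma> i) \<le> (x i - c) * (?M - ?m)"
      using d xc[OF i] by (simp add: mult_left_mono)
    also have "\<dots> \<le> \<epsilon> * (?M - ?m)"
      using xc[OF i] mM by (simp add: mult_right_mono)
    finally show "(x i - c) * (hvec n f \<tau> i - hvec n f \<sigma> i) \<le> \<epsilon> * (?M - ?m)" .
  qed
  also have "\<dots> = \<epsilon> * real n * (?M - ?m)" by simp
  finally have A: "LB_div n f x \<sigma> \<le> \<epsilon> * real n * (?M - ?m)" .
  have B: "\<epsilon> * real n * (?M - ?m) \<le> \<epsilon> * real n * ?M"
    using epsnn mnn by (simp add: mult_left_mono)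
  show ?thesis using A B by blast
qed

end
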